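(* Consider a target sender connected to an $(n,k)$ sampling mix, and an adversary who observes the sender of every message entering the mix, the recipient of every message leaving the mix, and who can additionally infer the state of the mix (the queue lengths). Then, by intersection attacks, the adversary can (almost surely, in finite time) identify all receivers of the target sender.
   Context: An $(n,k)$ sampling mix (integers $n$, $k$ with $2 \le k \le n-1$) consists of $n$ first-in first-out queues with infinite buffers; queue $i$ buffers the messages of sender $i$, which arrive according to a Poisson process of rate $\lambda$, independently across senders. Each sender sends its messages to receivers in its own set of at most $m$ receivers, these receiver sets being disjoint across senders. At each message arrival (say to queue $j$), $k$ queues are selected and released (a released queue instantly forwards its head message if non-empty): with probability $p_a$, queue $j$ together with $k-1$ queues chosen uniformly at random among the other $n-1$; with probability $1-p_a$, $k$ queues chosen uniformly at random among the other $n-1$ queues. An intersection attack is an attack in which the adversary collects sets of observed recipients of outgoing messages that must contain (or must not contain) receivers of the target sender, and combines (intersects/refines) them over time to isolate the target's receivers. *)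

theory Defs
  imports "HOL-Probability.Probability" "HOL-Library.Multiset"
begin

text \<open>Discrete-time (embedded jump chain) model of an (n,k) sampling mix.
  Senders / queues are 0..<n.  One step = one message arrival.
  A step input is (j, r, S): the message arrives from sender j, is addressed
  to receiver r, and the set S of k queues is released.\<close>

type_synonym 'r input = "nat \<times> 'r \<times> nat set"
type_synonym 'r mixstate = "nat \<Rightarrow> 'r list"

definition sel_pmf :: "nat \<Rightarrow> nat \<Rightarrow> real \<Rightarrow> nat \<Rightarrow> nat set pmf" where
  "sel_pmf n k pa j =
     do { b \<leftarrow> bernoulli_pmf pa;
          if b then map_pmf (insert j) (pmf_of_set {T. T \<subseteq> {0..<n} - {j} \<and> card T = k - 1})
          else pmf_of_set {T. T \<subseteq> {0..<n} - {j} \<and> card T = k} }"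

text \<open>Distribution of one step input: by the independent equal-rate Poisson
  arrivals, the sender of the next message is uniform; its recipient is drawn
  from the sender's receiver distribution q j.\<close>
definition input_pmf :: "nat \<Rightarrow> nat \<Rightarrow> real \<Rightarrow> (nat \<Rightarrow> 'r pmf) \<Rightarrow> 'r input pmf" where
  "input_pmf n k pa q =
     do { j \<leftarrow> pmf_of_set {0..<n};
          r \<leftarrow> q j;
          S \<leftarrow> sel_pmf n k pa j;
          return_pmf (j, r, S) }"

definition arrive :: "'r input \<Rightarrow> 'r mixstate \<Rightarrow> 'r mixstate" where
  "arrive x Q = (case x of (j, r, S) \<Rightarrow> Q(j := Q j @ [r]))"

definition mix_step :: "'r input \<Rightarrow> 'r mixstate \<Rightarrow> 'r mixstate" where
  "mix_step x Q = (case x of (j, r, S) \<Rightarrow>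
      (\<lambda>i. if i \<in> S then tl (arrive x Q i) else arrive x Q i))"

definition mix_out :: "'r input \<Rightarrow> 'r mixstate \<Rightarrow> 'r multiset" where
  "mix_out x Q = (case x of (j, r, S) \<Rightarrow>
      image_mset (\<lambda>i. hd (arrive x Q i)) (mset_set {i \<in> S. arrive x Q i \<noteq> []}))"

fun mix_state :: "'r input stream \<Rightarrow> nat \<Rightarrow> 'r mixstate" where
  "mix_state w 0 = (\<lambda>_. [])"
| "mix_state w (Suc t) = mix_step (w !! t) (mix_state w t)"

definition mix_obs :: "nat \<Rightarrow> 'r input stream \<Rightarrow> nat \<Rightarrow> nat \<times> nat list \<times> 'r multiset" where
  "mix_obs n w t = (fst (w !! t),
                    map (\<lambda>i. length (mix_state w (Suc t) i)) [0..<n],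
                    mix_out (w !! t) (mix_state w t))"

definition receiver_sets :: "nat \<Rightarrow> nat \<Rightarrow> (nat \<Rightarrow> 'r set) \<Rightarrow> bool" where
  "receiver_sets n m R \<longleftrightarrow>
     (\<forall>i<n. finite (R i) \<and> card (R i) \<le> m) \<and>
     (\<forall>i<n. \<forall>i'<n. i \<noteq> i' \<longrightarrow> R i \<inter> R i' = {})"

definition possible_input :: "nat \<Rightarrow> nat \<Rightarrow> real \<Rightarrow> (nat \<Rightarrow> 'r set) \<Rightarrow> 'r input \<Rightarrow> bool" where
  "possible_input n k pa R x = (case x of (j, r, S) \<Rightarrow>
      j < n \<and> r \<in> R j \<and> S \<in> set_pmf (sel_pmf n k pa j))"

definition identified ::
  "nat \<Rightarrow> nat \<Rightarrow> nat \<Rightarrow> real \<Rightarrow> (nat \<Rightarrow> 'r set) \<Rightarrow> nat \<Rightarrow> 'r input stream \<Rightarrow> nat \<Rightarrow> bool" where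
  "identified n k m pa R a w T \<longleftrightarrow>
     (\<forall>(R' :: nat \<Rightarrow> 'r set) w'.
        receiver_sets n m R' \<and> (\<Union>i<n. R' i) = (\<Union>i<n. R i) \<and>
        (\<forall>t<T. possible_input n k pa R' (w' !! t) \<and> mix_obs n w' t = mix_obs n w t)
        \<longrightarrow> R' a = R a)"

end

theory Submission
  imports Defs
begin


lemma stake_eq_meas:
  fixes p :: "'a pmf"
  shows "{w. stake N w = xs} \<in> sets (stream_space (measure_pmf p))"
proof (cases "length xs = N")
  case True
  have "{w. stake N w = xs} = {w\<in>space (stream_space (measure_pmf p)). \<forall>s\<in>{..<N}. w !! s = xs ! s}"
    using True by (auto simp: space_stream_space list_eq_iff_nth_eq)
  also have "\<dots> \<in> sets (stream_space (measure_pmf p))"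
    by measurable
  finally show ?thesis .
next
  case False
  then have "{w. stake N w = xs} = {}" by auto
  then show ?thesis by simp
qed

lemma stake_pred_meas:
  fixes p :: "'a pmf"
  assumes "countable C"
  shows "{w. stake N w \<in> lists C \<and> P (stake N w)} \<in> sets (stream_space (measure_pmf p))"
proof -
  have "{w. stake N w \<in> lists C \<and> P (stake N w)} = (\<Union>xs\<in>{xs. xs \<in> lists C \<and> P xs}. {w. stake N w = xs})"
    by auto
  also have "\<dots> \<in> sets (stream_space (measure_pmf p))"
    by (rule sets.countable_UN'') (auto intro: countable_subset[OF _ countable_lists[OF assms]] stake_eq_meas)
  finally show ?thesis .
qed

lemma card_less_Suc_split:
  "card {t. t < Suc N \<and> Q t} = (if Q 0 then 1 else 0) + card {t. t < N \<and> Q (Suc t)}"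
proof -
  have eq: "{t. t < Suc N \<and> Q t} = {t\<in>{0}. Q t} \<union> Suc ` {t. t < N \<and> Q (Suc t)}"
    by (auto simp: less_Suc_eq_0_disj)
  have "card ({t\<in>{0}. Q t} \<union> Suc ` {t. t < N \<and> Q (Suc t)}) =
        card {t\<in>{0}. Q t} + card (Suc ` {t. t < N \<and> Q (Suc t)})"
    by (rule card_Un_disjoint) auto
  also have "card (Suc ` {t. t < N \<and> Q (Suc t)}) = card {t. t < N \<and> Q (Suc t)}"
    by (rule card_image) auto
  also have "card {t\<in>{0}. Q t} = (if Q 0 then 1 else 0)"
  proof -
    have "{t\<in>{0}. Q t} = (if Q 0 then {0} else {})" by auto
    then show ?thesis by simp
  qed
  finally show ?thesis using eq by simp
qed

lemma stake_lists: "stake m w \<in> lists C \<longleftrightarrow> (\<forall>s<m. w !! s \<in> C)"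
  by (induct m arbitrary: w) (auto simp: less_Suc_eq_0_disj)

locale gsetup =
  fixes p :: "'a pmf" and E :: "'a set" and A :: "'a list \<Rightarrow> bool"
begin

abbreviation "S \<equiv> stream_space (measure_pmf p)"
abbreviation "C \<equiv> set_pmf p"
definition "c = measure_pmf.prob p E"

definition cnt :: "'a list \<Rightarrow> nat \<Rightarrow> 'a stream \<Rightarrow> nat" where
  "cnt h N w = card {t. t < N \<and> A (h @ stake t w)}"
definition nohit :: "'a list \<Rightarrow> nat \<Rightarrow> 'a stream \<Rightarrow> bool" where
  "nohit h N w = (\<forall>t<N. \<not> (A (h @ stake t w) \<and> w !! t \<in> E))"
definition X :: "'a list \<Rightarrow> nat \<Rightarrow> nat \<Rightarrow> 'a stream set" where
  "X h N m = {w. stake N w \<in> lists C \<and> m \<le> cnt h N w \<and> nohit h N w}"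

lemma X_meas: "X h N m \<in> sets S"
proof -
  have "X h N m = {w. stake N w \<in> lists C \<and>
     (\<lambda>xs. m \<le> card {t. t < N \<and> A (h @ take t xs)} \<and> (\<forall>t<N. \<not> (A (h @ take t xs) \<and> xs ! t \<in> E))) (stake N w)}"
  proof -
    have e: "{t. t < N \<and> A (h @ take t (stake N w))} = {t. t < N \<and> A (h @ stake t w)}" for w
      by (auto simp: take_stake min_def)
    show ?thesis
      unfolding X_def cnt_def nohit_def by (simp only: e) (auto simp: take_stake min_def)
  qed
  also have "\<dots> \<in> sets S" by (rule stake_pred_meas) simp
  finally show ?thesis .
qed

lemma X_Suc:
  "{w \<in> space S. x ## w \<in> X h (Suc N) m} =
     (if x \<in> C \<and> \<not> (A h \<and> x \<in> E) then X (h @ [x]) N (m - (if A h then 1 else 0)) else {})"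
proof -
  have c: "cnt h (Suc N) (x ## w) = (if A h then 1 else 0) + cnt (h @ [x]) N w" for w
    unfolding cnt_def by (subst card_less_Suc_split) simp
  have nh: "nohit h (Suc N) (x ## w) = (\<not> (A h \<and> x \<in> E) \<and> nohit (h @ [x]) N w)" for w
    unfolding nohit_def by (subst All_less_Suc2) simp
  show ?thesis
    unfolding X_def using c nh by (auto simp: space_stream_space)
qed

lemma c_bounds: "0 \<le> c" "c \<le> 1" unfolding c_def by auto

lemma X_bound: "emeasure S (X h N m) \<le> ennreal ((1 - c) ^ m)"
proof (induction N arbitrary: h m)
  case 0
  show ?case
  proof (cases m)
    case 0
    interpret S: prob_space S by (rule prob_space.prob_space_stream_space) (rule prob_space_measure_pmf)
    show ?thesis using 0 S.emeasure_le_1 by simp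
  next
    case (Suc m')
    then have "X h 0 m = {}" unfolding X_def cnt_def by auto
    then show ?thesis by simp
  qed
next
  case (Suc N)
  interpret P: prob_space "measure_pmf p" by (rule prob_space_measure_pmf)
  interpret S: prob_space S by (rule prob_space.prob_space_stream_space) (rule prob_space_measure_pmf)
  show ?case
  proof (cases m)
    case 0
    show ?thesis using 0 S.emeasure_le_1 by simp
  next
    case (Suc m')
    have "emeasure S (X h (Suc N) m) = (\<integral>\<^sup>+x. emeasure S {w \<in> space S. x ## w \<in> X h (Suc N) m} \<partial>measure_pmf p)"
      by (rule prob_space.emeasure_stream_space[OF prob_space_measure_pmf]) (rule X_meas)
    also have "\<dots> = (\<integral>\<^sup>+x. emeasure S (if x \<in> C \<and> \<not> (A h \<and> x \<in> E) then X (h @ [x]) N (m - (if A h then 1 else 0)) else {}) \<partial>measure_pmf p)"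
      by (simp only: X_Suc)
    also have "\<dots> \<le> ennreal ((1 - c) ^ m)"
    proof (cases "A h")
      case True
      have "(\<integral>\<^sup>+x. emeasure S (if x \<in> C \<and> \<not> (A h \<and> x \<in> E) then X (h @ [x]) N (m - (if A h then 1 else 0)) else {}) \<partial>measure_pmf p)
          \<le> (\<integral>\<^sup>+x. ennreal ((1 - c) ^ m') * indicator (- E) x \<partial>measure_pmf p)"
        using True Suc Suc.IH by (intro nn_integral_mono) (auto split: split_indicator)
      also have "\<dots> = ennreal ((1 - c) ^ m') * emeasure (measure_pmf p) (- E)"
        by (rule nn_integral_cmult_indicator) simp
      also have "emeasure (measure_pmf p) (- E) = ennreal (1 - c)"
      proof -
        have "measure_pmf.prob p (- E) = 1 - c"
          unfolding c_def using measure_pmf.prob_compl[of E] by (simp add: Compl_eq_Diff_UNIV)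
        then show ?thesis by (simp add: measure_pmf.emeasure_eq_measure)
      qed
      also have "ennreal ((1 - c) ^ m') * ennreal (1 - c) = ennreal ((1 - c) ^ m)"
        using Suc c_bounds by (simp add: ennreal_mult'[symmetric] mult.commute)
      finally show ?thesis .
    next
      case False
      have "(\<integral>\<^sup>+x. emeasure S (if x \<in> C \<and> \<not> (A h \<and> x \<in> E) then X (h @ [x]) N (m - (if A h then 1 else 0)) else {}) \<partial>measure_pmf p)
          \<le> (\<integral>\<^sup>+x. ennreal ((1 - c) ^ m) \<partial>measure_pmf p)"
        using False Suc.IH by (intro nn_integral_mono) auto
      also have "\<dots> = ennreal ((1 - c) ^ m)" by (simp add: measure_pmf.emeasure_space_1)
      finally show ?thesis .
    qed
    finally show ?thesis .
  qed
qed


lemma AE_support: "AE w in S. \<forall>t. w !! t \<in> C"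
proof -
  show ?thesis
    using prob_space.AE_stream_all[OF prob_space_measure_pmf, of "\<lambda>x. x \<in> C" p]
    unfolding stream_all_def by (simp add: AE_measure_pmf)
qed

lemma G:
  assumes cpos: "c > 0"
  shows "AE w in S. (\<forall>N. \<exists>t\<ge>N. A (stake t w)) \<longrightarrow> (\<exists>t. A (stake t w) \<and> w !! t \<in> E)"
proof -
  interpret S: prob_space S by (rule prob_space.prob_space_stream_space) (rule prob_space_measure_pmf)
  define V where "V = (\<Inter>t. {w. stake (Suc t) w \<in> lists C \<and>
        (\<lambda>xs. \<not> (A (take t xs) \<and> xs ! t \<in> E)) (stake (Suc t) w)})"
  have V_meas: "V \<in> sets S"
  proof -
    have "\<And>t. {w. stake (Suc t) w \<in> lists C \<and>
        (\<lambda>xs. \<not> (A (take t xs) \<and> xs ! t \<in> E)) (stake (Suc t) w)} \<in> sets S"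
      by (rule stake_pred_meas) simp
    then show ?thesis unfolding V_def by (intro sets.countable_INT') auto
  qed
  have V_iff: "w \<in> V \<longleftrightarrow> (\<forall>t. w !! t \<in> C) \<and> (\<forall>t. \<not> (A (stake t w) \<and> w !! t \<in> E))" for w
  proof -
    have "stake (Suc t) w \<in> lists C \<longleftrightarrow> (\<forall>s\<le>t. w !! s \<in> C)" for t
      unfolding stake_lists by (auto simp: less_Suc_eq_le)
    then show ?thesis unfolding V_def by (auto simp: take_stake simp del: stake.simps)
  qed
  define W where "W m = (\<Union>N. V \<inter> X [] N m)" for m
  have W_meas: "W m \<in> sets S" for m
    unfolding W_def using V_meas X_meas by auto
  have W_bound: "emeasure S (W m) \<le> ennreal ((1 - c) ^ m)" for m
  proof -
    have inc: "incseq (\<lambda>N. V \<inter> X [] N m)"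
    proof (rule incseq_SucI)
      fix N
      have "cnt [] N w \<le> cnt [] (Suc N) w" for w
        unfolding cnt_def by (rule card_mono) auto
      then show "V \<inter> X [] N m \<subseteq> V \<inter> X [] (Suc N) m"
        by (auto simp: X_def V_iff nohit_def stake_lists simp del: stake.simps intro: order_trans)
    qed
    have "emeasure S (W m) = (SUP N. emeasure S (V \<inter> X [] N m))"
      unfolding W_def by (rule SUP_emeasure_incseq[symmetric]) (use inc V_meas X_meas in auto)
    also have "\<dots> \<le> ennreal ((1 - c) ^ m)"
    proof (rule SUP_least)
      fix N
      have "emeasure S (V \<inter> X [] N m) \<le> emeasure S (X [] N m)"
        by (rule emeasure_mono) (auto simp: X_meas)
      also have "\<dots> \<le> ennreal ((1 - c) ^ m)" by (rule X_bound)
      finally show "emeasure S (V \<inter> X [] N m) \<le> ennreal ((1 - c) ^ m)" .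
    qed
    finally show ?thesis .
  qed
  define Z where "Z = (\<Inter>m. W m)"
  have Z_meas: "Z \<in> sets S" unfolding Z_def using W_meas by auto
  have "measure S Z \<le> (1 - c) ^ m" for m
  proof -
    have "emeasure S Z \<le> emeasure S (W m)"
      by (rule emeasure_mono) (auto simp: Z_def W_meas)
    also have "\<dots> \<le> ennreal ((1 - c) ^ m)" by (rule W_bound)
    finally show ?thesis using c_bounds
      by (simp add: S.emeasure_eq_measure)
  qed
  moreover have "(\<lambda>m. (1 - c) ^ m) \<longlonglongrightarrow> 0"
    by (rule LIMSEQ_realpow_zero) (use cpos c_bounds in auto)
  ultimately have "measure S Z \<le> 0"
    by (intro LIMSEQ_le_const) auto
  then have "Z \<in> null_sets S"
    using Z_meas by (simp add: S.emeasure_eq_measure null_sets_def measure_nonneg antisym)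
  then have AEZ: "AE w in S. w \<notin> Z" by (rule AE_not_in)
  have cnt_unb: "\<exists>N. m \<le> card {t. t < N \<and> P t}" if io: "\<forall>N. \<exists>t\<ge>N. P t" for m and P :: "nat \<Rightarrow> bool"
  proof (induction m)
    case 0 then show ?case by auto
  next
    case (Suc m)
    then obtain N where N: "m \<le> card {t. t < N \<and> P t}" by auto
    obtain t where t: "t \<ge> N" "P t" using io by auto
    have "insert t {t. t < N \<and> P t} \<subseteq> {t'. t' < Suc t \<and> P t'}" using t by auto
    then have "card (insert t {t. t < N \<and> P t}) \<le> card {t'. t' < Suc t \<and> P t'}"
      by (intro card_mono) auto
    moreover have "card (insert t {t. t < N \<and> P t}) = Suc (card {t. t < N \<and> P t})"
      using t by (intro card_insert_disjoint) auto
    ultimately show ?case using N by (intro exI[of _ "Suc t"]) auto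
  qed
  show ?thesis
    using AEZ AE_support
  proof eventually_elim
    case (elim w)
    show ?case
    proof (rule impI, rule ccontr)
      assume io: "\<forall>N. \<exists>t\<ge>N. A (stake t w)" and nh: "\<not> (\<exists>t. A (stake t w) \<and> w !! t \<in> E)"
      have wV: "w \<in> V" using elim nh by (simp add: V_iff)
      have "w \<in> W m" for m
      proof -
        obtain N where N: "m \<le> card {t. t < N \<and> A (stake t w)}" using cnt_unb[OF io] by blast
        have "w \<in> X [] N m"
          using N wV unfolding X_def cnt_def nohit_def by (auto simp: V_iff stake_lists simp del: stake.simps)
        then show ?thesis using wV unfolding W_def by auto
      qed
      then have "w \<in> Z" unfolding Z_def by auto
      then show False using elim by auto
    qed
  qed
qed

end



lemma arrive_simp: "arrive (j, r0, S) Q i = (if i = j then Q j @ [r0] else Q i)"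
  unfolding arrive_def by simp

lemma mix_step_simp: "mix_step (j, r0, S) Q i = (if i \<in> S then tl (arrive (j, r0, S) Q i) else arrive (j, r0, S) Q i)"
  unfolding mix_step_def by simp

lemma out_mem:
  assumes "finite S" "i \<in> S" "arrive (j, r0, S) Q i \<noteq> []"
  shows "hd (arrive (j, r0, S) Q i) \<in># mix_out (j, r0, S) Q"
  using assms unfolding mix_out_def by auto

lemma out_memD:
  assumes "r \<in># mix_out (j, r0, S) Q"
  shows "\<exists>e\<in>S. arrive (j, r0, S) Q e \<noteq> [] \<and> r = hd (arrive (j, r0, S) Q e)"
proof (cases "finite {i \<in> S. arrive (j, r0, S) Q i \<noteq> []}")
  case True
  then show ?thesis using assms unfolding mix_out_def by auto
next
  case False
  then show ?thesis using assms unfolding mix_out_def by auto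
qed

lemma mix_state_cong: "(\<forall>s<t. w !! s = w' !! s) \<Longrightarrow> mix_state w t = mix_state w' t"
  by (induct t) auto

definition st :: "'r input list \<Rightarrow> 'r mixstate" where
  "st h = mix_state (h @- sconst undefined) (length h)"

lemma st_stake: "st (stake t w) = mix_state w t"
  unfolding st_def length_stake by (rule mix_state_cong) auto

lemma enter:
  assumes "w !! s = (i, r, S)" "mix_state w s i \<noteq> [] \<or> i \<notin> S"
  shows "r \<in> set (mix_state w (Suc s) i)"
  using assms by (cases "mix_state w s i") (auto simp: mix_step_simp arrive_simp)

lemma no_release_prefix:
  assumes "t \<le> u" "\<forall>s. t \<le> s \<and> s < u \<longrightarrow> i \<notin> snd (snd (w !! s))"
  shows "\<exists>ys. mix_state w u i = mix_state w t i @ ys"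
  using assms
proof (induction u)
  case 0 then show ?case by auto
next
  case (Suc u)
  show ?case
  proof (cases "t = Suc u")
    case True then show ?thesis by auto
  next
    case False
    then have "t \<le> u" using Suc by auto
    then obtain ys where ys: "mix_state w u i = mix_state w t i @ ys" using Suc by auto
    obtain j r0 S where x: "w !! u = (j, r0, S)" by (metis prod_cases3)
    have "i \<notin> S" using Suc.prems \<open>t \<le> u\<close> x by (metis fst_conv le_refl lessI snd_conv)
    then show ?thesis using ys x by (auto simp: mix_step_simp arrive_simp)
  qed
qed

lemma persist:
  assumes io: "\<forall>N. \<exists>u\<ge>N. i \<in> snd (snd (w !! u))"
  shows "mix_state w t i = pre @ r # post \<Longrightarrow> \<exists>t'\<ge>t. mix_state w t' i \<noteq> [] \<and> hd (mix_state w t' i) = r"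
proof (induction pre arbitrary: t post)
  case Nil
  then show ?case by auto
next
  case (Cons y pre)
  define u where "u = (LEAST u. t \<le> u \<and> i \<in> snd (snd (w !! u)))"
  have ex: "\<exists>u. t \<le> u \<and> i \<in> snd (snd (w !! u))" using io by blast
  have u1: "t \<le> u" "i \<in> snd (snd (w !! u))" using LeastI_ex[OF ex] unfolding u_def by auto
  have u2: "\<forall>s. t \<le> s \<and> s < u \<longrightarrow> i \<notin> snd (snd (w !! s))"
    unfolding u_def using not_less_Least by blast
  obtain ys where ys: "mix_state w u i = mix_state w t i @ ys"
    using no_release_prefix[OF u1(1) u2] by blast
  obtain j r0 S where x: "w !! u = (j, r0, S)" by (metis prod_cases3)
  have "i \<in> S" using u1 x by simp
  then have "mix_state w (Suc u) i = pre @ r # (post @ ys @ (if i = j then [r0] else []))"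
    using ys x Cons.prems by (auto simp: mix_step_simp arrive_simp)
  then obtain t' where "t' \<ge> Suc u" "mix_state w t' i \<noteq> [] \<and> hd (mix_state w t' i) = r"
    using Cons.IH by blast
  then show ?case using u1 by (intro exI[of _ t']) auto
qed

lemma persist':
  assumes io: "\<forall>N. \<exists>u\<ge>N. i \<in> snd (snd (w !! u))"
    and "r \<in> set (mix_state w t i)"
  shows "\<exists>t'\<ge>t. mix_state w t' i \<noteq> [] \<and> hd (mix_state w t' i) = r"
  using persist[OF io] assms(2) by (metis split_list)



lemma Tk_finite: "finite {T. T \<subseteq> {0..<n::nat} - {j} \<and> card T = m}"
  by (rule finite_subset[of _ "Pow {0..<n}"]) auto

lemma Tk_ne:
  assumes "j < n" "m \<le> n - 1"
  shows "{T. T \<subseteq> {0..<n::nat} - {j} \<and> card T = m} \<noteq> {}"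
proof -
  have "card ({0..<n} - {j}) = n - 1" using assms by simp
  then obtain T where "T \<subseteq> {0..<n} - {j}" "card T = m"
    using assms obtain_subset_with_card_n[of m "{0..<n} - {j}"] by auto
  then show ?thesis by auto
qed

lemma set_bernoulli: "0 \<le> pa \<Longrightarrow> pa \<le> 1 \<Longrightarrow> set_pmf (bernoulli_pmf pa) = {b. (b \<and> pa > 0) \<or> (\<not> b \<and> pa < 1)}"
  apply (rule set_eqI)
  subgoal for b by (cases b) (auto simp: set_pmf_iff)
  done

lemma set_sel:
  assumes "j < n" "k \<le> n - 1" "0 \<le> pa" "pa \<le> 1"
  shows "set_pmf (sel_pmf n k pa j) =
    (if pa > 0 then insert j ` {T. T \<subseteq> {0..<n} - {j} \<and> card T = k - 1} else {}) \<union>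
    (if pa < 1 then {T. T \<subseteq> {0..<n} - {j} \<and> card T = k} else {})"
proof -
  have ne1: "{T. T \<subseteq> {0..<n} - {j} \<and> card T = k - 1} \<noteq> {}"
    using assms by (intro Tk_ne) auto
  have ne2: "{T. T \<subseteq> {0..<n} - {j} \<and> card T = k} \<noteq> {}"
    using assms by (intro Tk_ne) auto
  show ?thesis
  proof -
    let ?A1 = "{T. T \<subseteq> {0..<n} - {j} \<and> card T = k - 1}"
    let ?A2 = "{T. T \<subseteq> {0..<n} - {j} \<and> card T = k}"
    have "set_pmf (sel_pmf n k pa j) = (\<Union>b\<in>set_pmf (bernoulli_pmf pa).
        set_pmf (if b then map_pmf (insert j) (pmf_of_set ?A1) else pmf_of_set ?A2))"
      unfolding sel_pmf_def by simp
    also have "\<dots> = (\<Union>b\<in>{b. (b \<and> pa > 0) \<or> (\<not> b \<and> pa < 1)}.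
        set_pmf (if b then map_pmf (insert j) (pmf_of_set ?A1) else pmf_of_set ?A2))"
      using assms by (simp only: set_bernoulli)
    also have "\<dots> = (if pa > 0 then set_pmf (map_pmf (insert j) (pmf_of_set ?A1)) else {}) \<union>
        (if pa < 1 then set_pmf (pmf_of_set ?A2) else {})"
    proof -
      have B: "{b. (b \<and> pa > 0) \<or> (\<not> b \<and> pa < 1)} = (if pa > 0 then {True} else {}) \<union> (if pa < 1 then {False} else {})"
        by auto
      show ?thesis by (simp only: B) simp
    qed
    also have "\<dots> = (if pa > 0 then insert j ` ?A1 else {}) \<union> (if pa < 1 then ?A2 else {})"
      by (simp only: set_map_pmf set_pmf_of_set[OF ne1 Tk_finite] set_pmf_of_set[OF ne2 Tk_finite])
    finally show ?thesis .
  qed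
qed

lemma sel_sub:
  assumes "S \<in> set_pmf (sel_pmf n k pa j)" "j < n" "k \<le> n - 1" "0 \<le> pa" "pa \<le> 1"
  shows "S \<subseteq> {0..<n}"
  using assms(1,2) unfolding set_sel[OF assms(2-5)] by (auto split: if_splits)

lemma set_input:
  assumes "0 < n"
  shows "x \<in> set_pmf (input_pmf n k pa q) \<longleftrightarrow>
     (fst x < n \<and> fst (snd x) \<in> set_pmf (q (fst x)) \<and> snd (snd x) \<in> set_pmf (sel_pmf n k pa (fst x)))"
  unfolding input_pmf_def using assms by (cases x) auto

lemma rel_len:
  "(e \<in> S \<and> arrive (j, r0, S) Q e \<noteq> []) \<longleftrightarrow>
     length (mix_step (j, r0, S) Q e) < length (Q e) + (if e = j then 1 else 0)"
  by (cases "Q e") (auto simp: mix_step_simp arrive_simp)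

locale idsetup =
  fixes n k m :: nat and pa :: real and R R' :: "nat \<Rightarrow> 'r set" and w w' :: "'r input stream" and T :: nat
  assumes k: "k \<le> n - 1" and pa: "0 \<le> pa" "pa \<le> 1"
    and obs: "\<forall>t<T. possible_input n k pa R' (w' !! t) \<and> mix_obs n w' t = mix_obs n w t"
begin

lemma len_eq: "t \<le> T \<Longrightarrow> e < n \<Longrightarrow> length (mix_state w' t e) = length (mix_state w t e)"
proof (cases t)
  case 0 then show ?thesis by simp
next
  case (Suc t')
  assume "t \<le> T" "e < n"
  then have "mix_obs n w' t' = mix_obs n w t'" using obs Suc by auto
  then have "map (\<lambda>i. length (mix_state w' (Suc t') i)) [0..<n] = map (\<lambda>i. length (mix_state w (Suc t') i)) [0..<n]"
    unfolding mix_obs_def by simp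
  then have "\<forall>x\<in>set [0..<n]. length (mix_state w' (Suc t') x) = length (mix_state w (Suc t') x)"
    by (simp only: map_eq_conv)
  then show ?thesis using Suc \<open>e < n\<close> by simp
qed

lemma inv': "t \<le> T \<Longrightarrow> set (mix_state w' t e) \<subseteq> R' e"
proof (induction t arbitrary: e)
  case 0 then show ?case by simp
next
  case (Suc t)
  obtain j r0 S where x: "w' !! t = (j, r0, S)" by (metis prod_cases3)
  have "possible_input n k pa R' (w' !! t)" using obs Suc.prems by auto
  then have r0R: "r0 \<in> R' j" using x unfolding possible_input_def by simp
  have IH: "set (mix_state w' t e') \<subseteq> R' e'" for e' using Suc by auto
  show ?case using x
  proof -
    have a: "set (arrive (j, r0, S) (mix_state w' t) e) \<subseteq> R' e"
      using r0R IH by (auto simp: arrive_simp)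
    have tl: "set (tl xs) \<subseteq> set xs" for xs :: "'r list" by (cases xs) auto
    show ?thesis using a tl[of "arrive (j, r0, S) (mix_state w' t) e"] x
      by (simp add: mix_step_simp) blast
  qed
qed

lemma D5:
  assumes "t < T" "r \<in># mix_out (w !! t) (mix_state w t)"
  shows "\<exists>e<n. e \<in> snd (snd (w !! t)) \<and> r \<in> R' e"
proof -
  obtain j r0 S where x: "w !! t = (j, r0, S)" by (metis prod_cases3)
  obtain j' r0' S' where x': "w' !! t = (j', r0', S')" by (metis prod_cases3)
  have o: "mix_obs n w' t = mix_obs n w t" and pi: "possible_input n k pa R' (w' !! t)" using obs assms by auto
  have jj: "j' = j" using o x x' unfolding mix_obs_def by simp
  have oo: "mix_out (w' !! t) (mix_state w' t) = mix_out (w !! t) (mix_state w t)"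
    using o unfolding mix_obs_def by simp
  have pi': "j' < n" "r0' \<in> R' j'" "S' \<in> set_pmf (sel_pmf n k pa j')"
    using pi x' unfolding possible_input_def by auto
  obtain e where e: "e \<in> S'" "arrive (j', r0', S') (mix_state w' t) e \<noteq> []"
    "r = hd (arrive (j', r0', S') (mix_state w' t) e)"
    using out_memD[of r j' r0' S' "mix_state w' t"] assms(2) oo x' by auto
  have en: "e < n" using sel_sub[OF pi'(3) pi'(1) k pa] e(1) by auto
  have "length (mix_state w' (Suc t) e) < length (mix_state w' t e) + (if e = j' then 1 else 0)"
    using e rel_len[of e S' j' r0' "mix_state w' t"] x' by simp
  then have "length (mix_state w (Suc t) e) < length (mix_state w t e) + (if e = j then 1 else 0)"
    using len_eq[of "Suc t" e] len_eq[of t e] assms(1) en jj by simp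
  then have eS: "e \<in> S" using rel_len[of e S j r0 "mix_state w t"] x by simp
  have "set (arrive (j', r0', S') (mix_state w' t) e) \<subseteq> R' e"
    using inv'[of t e] assms(1) pi'(2) by (auto simp: arrive_simp)
  then have "r \<in> R' e" using e(2,3) by (auto dest: list.set_sel(1))
  then show ?thesis using en eS x by auto
qed

end

lemma identify:
  fixes R :: "nat \<Rightarrow> 'r set"
  assumes kk: "2 \<le> k" "k \<le> n - 1" and ppa: "0 \<le> pa" "pa \<le> 1" and a: "a < n"
    and succ: "\<forall>i<n. \<forall>r\<in>R i. \<forall>d<n. d \<noteq> i \<longrightarrow>
        (\<exists>t<T. r \<in># mix_out (w !! t) (mix_state w t) \<and> d \<notin> snd (snd (w !! t)))"
  shows "identified n k m pa R a w T"
  unfolding identified_def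
proof (intro allI impI, elim conjE)
  fix R' :: "nat \<Rightarrow> 'r set" and w'
  assume rs: "receiver_sets n m R'" and un: "(\<Union>i<n. R' i) = (\<Union>i<n. R i)"
    and ob: "\<forall>t<T. possible_input n k pa R' (w' !! t) \<and> mix_obs n w' t = mix_obs n w t"
  interpret idsetup n k m pa R R' w w' T using kk ppa ob by unfold_locales auto
  have disj: "\<And>e e' r. e < n \<Longrightarrow> e' < n \<Longrightarrow> r \<in> R' e \<Longrightarrow> r \<in> R' e' \<Longrightarrow> e = e'"
    using rs unfolding receiver_sets_def by blast
  have sub: "R i \<subseteq> R' i" if i: "i < n" for i
  proof
    fix r assume r: "r \<in> R i"
    define d0 where "d0 = (if i = 0 then 1 else 0 :: nat)"
    have d0: "d0 < n" "d0 \<noteq> i" using kk i unfolding d0_def by auto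
    obtain t0 where t0: "t0 < T" "r \<in># mix_out (w !! t0) (mix_state w t0)"
      using succ i r d0 by blast
    obtain e0 where e0: "e0 < n" "e0 \<in> snd (snd (w !! t0))" "r \<in> R' e0"
      using D5[OF t0] by blast
    have "e0 = i"
    proof (rule ccontr)
      assume "e0 \<noteq> i"
      then obtain t1 where t1: "t1 < T" "r \<in># mix_out (w !! t1) (mix_state w t1)" "e0 \<notin> snd (snd (w !! t1))"
        using succ i r e0(1) by blast
      obtain e1 where e1: "e1 < n" "e1 \<in> snd (snd (w !! t1))" "r \<in> R' e1"
        using D5[OF t1(1,2)] by blast
      have "e1 = e0" using disj[OF e1(1) e0(1) e1(3) e0(3)] .
      then show False using t1(3) e1(2) by simp
    qed
    then show "r \<in> R' i" using e0 by simp
  qed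
  show "R' a = R a"
  proof
    show "R a \<subseteq> R' a" using sub a by blast
    show "R' a \<subseteq> R a"
    proof
      fix r assume r: "r \<in> R' a"
      then have "r \<in> (\<Union>i<n. R i)" using un a by blast
      then obtain i where i: "i < n" "r \<in> R i" by blast
      then have "r \<in> R' i" using sub by blast
      then have "i = a" using disj[OF i(1) a] r by blast
      then show "r \<in> R a" using i by simp
    qed
  qed
qed



lemma G_io:
  fixes p :: "'a pmf"
  assumes "measure_pmf.prob p E > 0"
  shows "AE w in stream_space (measure_pmf p). (\<forall>N. \<exists>t\<ge>N. A (stake t w)) \<longrightarrow> (\<forall>N. \<exists>t\<ge>N. A (stake t w) \<and> w !! t \<in> E)"
proof -
  have "AE w in stream_space (measure_pmf p). (\<forall>N'. \<exists>t\<ge>N'. A (stake t w) \<and> N \<le> length (stake t w)) \<longrightarrow>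
     (\<exists>t. (A (stake t w) \<and> N \<le> length (stake t w)) \<and> w !! t \<in> E)" for N
    by (rule gsetup.G) (simp add: gsetup.c_def assms)
  then have "AE w in stream_space (measure_pmf p). \<forall>N. (\<forall>N'. \<exists>t\<ge>N'. A (stake t w) \<and> N \<le> length (stake t w)) \<longrightarrow>
     (\<exists>t. (A (stake t w) \<and> N \<le> length (stake t w)) \<and> w !! t \<in> E)"
    by (subst AE_all_countable) (intro allI)
  then show ?thesis
  proof (rule eventually_mono, intro impI allI)
    fix w N
    assume h: "\<forall>N. (\<forall>N'. \<exists>t\<ge>N'. A (stake t w) \<and> N \<le> length (stake t w)) \<longrightarrow>
       (\<exists>t. (A (stake t w) \<and> N \<le> length (stake t w)) \<and> w !! t \<in> E)"
      and io: "\<forall>N. \<exists>t\<ge>N. A (stake t w)"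
    have "\<forall>N'. \<exists>t\<ge>N'. A (stake t w) \<and> N \<le> length (stake t w)"
    proof
      fix N'
      obtain t where "t \<ge> max N N'" "A (stake t w)" using io by blast
      then show "\<exists>t\<ge>N'. A (stake t w) \<and> N \<le> length (stake t w)" by auto
    qed
    then show "\<exists>t\<ge>N. A (stake t w) \<and> w !! t \<in> E" using h by auto
  qed
qed

lemma G_inf:
  fixes p :: "'a pmf"
  assumes "measure_pmf.prob p E > 0"
  shows "AE w in stream_space (measure_pmf p). \<forall>N. \<exists>t\<ge>N. w !! t \<in> E"
  using G_io[OF assms, of "\<lambda>_. True"] by (rule eventually_mono) auto

lemma ex_sub:
  fixes X Y :: "nat set"
  assumes "finite X" "Y \<inter> X = {}" "Y \<subseteq> {0..<n}" "card Y \<le> k'" "k' + card X \<le> n"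
  shows "\<exists>T. Y \<subseteq> T \<and> T \<subseteq> {0..<n} - X \<and> card T = k'"
proof -
  have fY: "finite Y" using assms(3) finite_subset by blast
  let ?U = "{0..<n} - X - Y"
  have "card ?U \<ge> n - card X - card Y"
  proof -
    have "card ({0..<n} - X) \<ge> n - card X" using diff_card_le_card_Diff[OF assms(1), of "{0..<n}"] by simp
    moreover have "card ({0..<n} - X - Y) \<ge> card ({0..<n} - X) - card Y"
      using diff_card_le_card_Diff[OF fY, of "{0..<n} - X"] by simp
    ultimately show ?thesis by linarith
  qed
  then have "k' - card Y \<le> card ?U" using assms by linarith
  then obtain T0 where T0: "T0 \<subseteq> ?U" "card T0 = k' - card Y" "finite T0"
    by (rule obtain_subset_with_card_n)
  have "card (Y \<union> T0) = card Y + card T0"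
    using T0 fY by (intro card_Un_disjoint) auto
  then show ?thesis using T0 assms by (intro exI[of _ "Y \<union> T0"]) auto
qed



lemma success:
  fixes R :: "nat \<Rightarrow> 'r set" and q :: "nat \<Rightarrow> 'r pmf"
  assumes kk: "2 \<le> k" "k \<le> n - 1" and ppa: "0 \<le> pa" "pa \<le> 1"
    and qR: "\<And>i. i < n \<Longrightarrow> set_pmf (q i) = R i"
    and i: "i < n" and r: "r \<in> R i" and d: "d < n" "d \<noteq> i"
  shows "AE w in stream_space (measure_pmf (input_pmf n k pa q)).
           \<exists>t. r \<in># mix_out (w !! t) (mix_state w t) \<and> d \<notin> snd (snd (w !! t))"
proof -
  define p where "p = input_pmf n k pa q"
  have n0: "0 < n" using i by auto
  have nk: "Suc k \<le> n" "Suc 0 \<le> k - Suc 0" using kk i by auto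
  have inp: "(j, r0, S) \<in> set_pmf p \<longleftrightarrow> j < n \<and> r0 \<in> set_pmf (q j) \<and> S \<in> set_pmf (sel_pmf n k pa j)" for j r0 S
    using set_input[OF n0, of "(j, r0, S)" k pa q] unfolding p_def by simp
  have selm: "S \<in> set_pmf (sel_pmf n k pa j) \<longleftrightarrow>
     (pa > 0 \<and> S \<in> insert j ` {T. T \<subseteq> {0..<n} - {j} \<and> card T = k - 1}) \<or>
     (pa < 1 \<and> S \<in> {T. T \<subseteq> {0..<n} - {j} \<and> card T = k})" if "j < n" for j S
    using set_sel[OF that kk(2) ppa] by auto
  have rq: "r \<in> set_pmf (q i)" using qR i r by simp
  define E1 where "E1 = {x :: 'r input. i \<in> snd (snd x) \<and> d \<notin> snd (snd x)}"
  define F where "F = {x :: 'r input. fst x = i \<and> fst (snd x) = r}"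
  define E2 where "E2 = {x :: 'r input. fst x = i \<and> fst (snd x) = r \<and> i \<in> snd (snd x) \<and> d \<notin> snd (snd x)}"
  define F' where "F' = {x :: 'r input. fst x = i \<and> fst (snd x) = r \<and> i \<notin> snd (snd x)}"
  have P1: "measure_pmf.prob p E1 > 0"
  proof (cases "pa > 0")
    case True
    have "card ({0..<n} - {i, d}) \<ge> n - card {i, d}"
      using diff_card_le_card_Diff[of "{i, d}" "{0..<n}"] by simp
    then have "card ({0..<n} - {i, d}) > 0" using kk d by (auto simp: card_insert_if)
    then obtain j0 where j0: "j0 \<in> {0..<n} - {i, d}" by (metis card_gt_0_iff ex_in_conv)
    obtain T where T: "{i} \<subseteq> T" "T \<subseteq> {0..<n} - {j0, d}" "card T = k - 1"
    proof -
      have ar: "Suc 0 \<le> k - Suc 0" "Suc k \<le> n" using kk i by auto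
      show ?thesis using that ex_sub[of "{j0, d}" "{i}" n "k - 1"] j0 i kk d ar by (auto simp: card_insert_if)
    qed
    obtain r0 where r0: "r0 \<in> set_pmf (q j0)" using set_pmf_not_empty by fastforce
    have "(j0, r0, insert j0 T) \<in> set_pmf p"
      using j0 r0 T True by (auto simp: inp selm)
    moreover have "(j0, r0, insert j0 T) \<in> E1" using T j0 unfolding E1_def by auto
    ultimately show ?thesis by (rule measure_pmf_posI)
  next
    case False
    then have pa1: "pa < 1" using ppa by auto
    obtain T where T: "{i} \<subseteq> T" "T \<subseteq> {0..<n} - {d}" "card T = k"
      using ex_sub[of "{d}" "{i}" n k] i kk d nk by auto
    obtain r0 where r0: "r0 \<in> set_pmf (q d)" using set_pmf_not_empty by fastforce
    have "(d, r0, T) \<in> set_pmf p"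
      using d r0 T pa1 by (auto simp: inp selm)
    moreover have "(d, r0, T) \<in> E1" using T unfolding E1_def by auto
    ultimately show ?thesis by (rule measure_pmf_posI)
  qed
  have PF: "measure_pmf.prob p F > 0"
  proof -
    obtain S0 where S0: "S0 \<in> set_pmf (sel_pmf n k pa i)" using set_pmf_not_empty by fastforce
    have "(i, r, S0) \<in> set_pmf p" using i rq S0 by (simp add: inp)
    moreover have "(i, r, S0) \<in> F" unfolding F_def by simp
    ultimately show ?thesis by (rule measure_pmf_posI)
  qed
  have P2: "measure_pmf.prob p E2 > 0" if pa0: "pa > 0"
  proof -
    obtain T where T: "T \<subseteq> {0..<n} - {i, d}" "card T = k - 1"
      using ex_sub[of "{i, d}" "{}" n "k - 1"] i kk d nk by (auto simp: card_insert_if)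
    have "(i, r, insert i T) \<in> set_pmf p"
      using i rq T pa0 by (auto simp: inp selm)
    moreover have "(i, r, insert i T) \<in> E2" using T d unfolding E2_def by auto
    ultimately show ?thesis by (rule measure_pmf_posI)
  qed
  have P3: "measure_pmf.prob p F' > 0" if pa1: "pa < 1"
  proof -
    obtain T where T: "T \<subseteq> {0..<n} - {i}" "card T = k"
      using ex_sub[of "{i}" "{}" n k] i kk nk by auto
    have "(i, r, T) \<in> set_pmf p"
      using i rq T pa1 by (auto simp: inp selm)
    moreover have "(i, r, T) \<in> F'" using T unfolding F'_def by auto
    ultimately show ?thesis by (rule measure_pmf_posI)
  qed
  let ?S = "stream_space (measure_pmf p)"
  have supp: "AE w in ?S. \<forall>t. w !! t \<in> set_pmf p" by (rule gsetup.AE_support)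
  have io1: "AE w in ?S. \<forall>N. \<exists>t\<ge>N. w !! t \<in> E1" by (rule G_inf[OF P1])
  have HG: "AE w in ?S. (\<forall>N. \<exists>t\<ge>N. mix_state w t i \<noteq> [] \<and> hd (mix_state w t i) = r) \<longrightarrow>
      (\<forall>N. \<exists>t\<ge>N. (mix_state w t i \<noteq> [] \<and> hd (mix_state w t i) = r) \<and> w !! t \<in> E1)"
    using G_io[OF P1, of "\<lambda>h. st h i \<noteq> [] \<and> hd (st h i) = r"] by (simp only: st_stake)
  have NG: "AE w in ?S. (\<forall>N. \<exists>t\<ge>N. mix_state w t i \<noteq> []) \<longrightarrow>
      (\<forall>N. \<exists>t\<ge>N. mix_state w t i \<noteq> [] \<and> w !! t \<in> F)"
    using G_io[OF PF, of "\<lambda>h. st h i \<noteq> []"] by (simp only: st_stake)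
  have EG: "AE w in ?S. 0 < pa \<longrightarrow> (\<forall>N. \<exists>t\<ge>N. mix_state w t i = []) \<longrightarrow>
      (\<forall>N. \<exists>t\<ge>N. mix_state w t i = [] \<and> w !! t \<in> E2)"
  proof (cases "0 < pa")
    case True
    show ?thesis
      using G_io[OF P2[OF True], of "\<lambda>h. st h i = []"] by (simp only: st_stake True simp_thms)
  next
    case False then show ?thesis by simp
  qed
  have FG: "AE w in ?S. pa < 1 \<longrightarrow> (\<forall>N. \<exists>t\<ge>N. w !! t \<in> F')"
  proof (cases "pa < 1")
    case True
    show ?thesis using G_inf[OF P3[OF True]] by (simp only: True simp_thms)
  next
    case False then show ?thesis by simp
  qed
  show ?thesis
    unfolding p_def[symmetric]
    using supp io1 HG NG EG FG
  proof eventually_elim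
    case (elim w)
    note supp = elim(1) and io1 = elim(2) and HG = elim(3) and NG = elim(4) and EG = elim(5) and FG = elim(6)
    have relio: "\<forall>N. \<exists>u\<ge>N. i \<in> snd (snd (w !! u))" using io1 unfolding E1_def by auto
    have finS: "finite (snd (snd (w !! t)))" for t
    proof -
      obtain j r0 S where x: "w !! t = (j, r0, S)" by (metis prod_cases3)
      then have "j < n" "S \<in> set_pmf (sel_pmf n k pa j)" using supp inp by metis+
      then have "S \<subseteq> {0..<n}" using sel_sub kk ppa by blast
      then show ?thesis using x finite_subset by fastforce
    qed
    have fromH: "\<exists>t. r \<in># mix_out (w !! t) (mix_state w t) \<and> d \<notin> snd (snd (w !! t))"
      if Hio: "\<forall>N. \<exists>t\<ge>N. mix_state w t i \<noteq> [] \<and> hd (mix_state w t i) = r"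
    proof -
      obtain t where t: "mix_state w t i \<noteq> []" "hd (mix_state w t i) = r" "w !! t \<in> E1"
        using HG Hio by blast
      obtain j r0 S where x: "w !! t = (j, r0, S)" by (metis prod_cases3)
      have iS: "i \<in> S" "d \<notin> S" using t(3) x unfolding E1_def by auto
      have ar: "arrive (j, r0, S) (mix_state w t) i \<noteq> []" "hd (arrive (j, r0, S) (mix_state w t) i) = r"
        using t(1,2) by (auto simp: arrive_simp)
      have "r \<in># mix_out (j, r0, S) (mix_state w t)"
        using out_mem[of S i j r0 "mix_state w t"] finS[of t] x iS ar by simp
      then show ?thesis using x iS by (intro exI[of _ t]) simp
    qed
    have enterH: "\<forall>N. \<exists>t\<ge>N. mix_state w t i \<noteq> [] \<and> hd (mix_state w t i) = r"
      if Fio: "\<forall>N. \<exists>s\<ge>N. w !! s \<in> F \<and> (mix_state w s i \<noteq> [] \<or> i \<notin> snd (snd (w !! s)))"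
    proof
      fix N
      obtain s where s: "s \<ge> N" "w !! s \<in> F" "mix_state w s i \<noteq> [] \<or> i \<notin> snd (snd (w !! s))"
        using Fio by blast
      obtain j r0 S where x: "w !! s = (j, r0, S)" by (metis prod_cases3)
      have x': "w !! s = (i, r, S)" using x s(2) unfolding F_def by simp
      have "r \<in> set (mix_state w (Suc s) i)"
        using enter[OF x'] s(3) x' by simp
      then obtain t' where "t' \<ge> Suc s" "mix_state w t' i \<noteq> [] \<and> hd (mix_state w t' i) = r"
        using persist'[OF relio] by blast
      then show "\<exists>t\<ge>N. mix_state w t i \<noteq> [] \<and> hd (mix_state w t i) = r"
        using s(1) by (intro exI[of _ t']) auto
    qed
    show ?case
    proof (cases "pa < 1")
      case True
      then have "\<forall>N. \<exists>s\<ge>N. w !! s \<in> F'" using FG by simp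
      then have "\<forall>N. \<exists>s\<ge>N. w !! s \<in> F \<and> (mix_state w s i \<noteq> [] \<or> i \<notin> snd (snd (w !! s)))"
        unfolding F_def F'_def by blast
      then show ?thesis using fromH enterH by blast
    next
      case False
      then have pa0: "0 < pa" using ppa by auto
      show ?thesis
      proof (cases "\<forall>N. \<exists>t\<ge>N. mix_state w t i \<noteq> []")
        case True
        then have "\<forall>N. \<exists>s\<ge>N. w !! s \<in> F \<and> (mix_state w s i \<noteq> [] \<or> i \<notin> snd (snd (w !! s)))"
          using NG by blast
        then show ?thesis using fromH enterH by blast
      next
        case False
        then obtain N0 where N0: "\<forall>t\<ge>N0. mix_state w t i = []" by auto
        have "\<forall>N. \<exists>t\<ge>N. mix_state w t i = []"
        proof
          fix N show "\<exists>t\<ge>N. mix_state w t i = []" using N0 by (intro exI[of _ "max N N0"]) auto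
        qed
        then obtain t where t: "mix_state w t i = []" "w !! t \<in> E2" using EG pa0 by blast
        obtain j r0 S where x: "w !! t = (j, r0, S)" by (metis prod_cases3)
        have x': "j = i" "r0 = r" "i \<in> S" "d \<notin> S" using x t(2) unfolding E2_def by auto
        have ar: "arrive (j, r0, S) (mix_state w t) i = [r]" using t(1) x' by (simp add: arrive_simp)
        have "r \<in># mix_out (j, r0, S) (mix_state w t)"
          using out_mem[of S i j r0 "mix_state w t"] finS[of t] x x' ar by simp
        then show ?thesis using x x' by (intro exI[of _ t]) simp
      qed
    qed
  qed
qed



theorem theorem4:
  fixes n k m a :: nat and pa :: real
    and R :: "nat \<Rightarrow> 'r set" and q :: "nat \<Rightarrow> 'r pmf"
  assumes "2 \<le> k" and "k \<le> n - 1"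
    and "0 \<le> pa" and "pa \<le> 1"
    and "receiver_sets n m R"
    and "\<And>i. i < n \<Longrightarrow> R i \<noteq> {}"
    and "\<And>i. i < n \<Longrightarrow> set_pmf (q i) = R i"
    and "a < n"
  shows "AE w in stream_space (measure_pmf (input_pmf n k pa q)).
           \<exists>T. identified n k m pa R a w T"
proof -
  define Trip where "Trip = {y :: nat \<times> 'r \<times> nat. fst y < n \<and> fst (snd y) \<in> R (fst y) \<and> snd (snd y) < n \<and> snd (snd y) \<noteq> fst y}"
  have finR: "finite (R i)" if "i < n" for i using assms(5) that unfolding receiver_sets_def by auto
  have "Trip \<subseteq> (SIGMA i:{..<n}. R i \<times> {..<n})" unfolding Trip_def by auto
  moreover have "finite (SIGMA i:{..<n}. R i \<times> {..<n})" using finR by (intro finite_SigmaI) auto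
  ultimately have finT: "finite Trip" by (rule finite_subset)
  have "AE w in stream_space (measure_pmf (input_pmf n k pa q)). \<forall>y\<in>Trip.
      \<exists>t. fst (snd y) \<in># mix_out (w !! t) (mix_state w t) \<and> snd (snd y) \<notin> snd (snd (w !! t))"
  proof (rule AE_ball_countable')
    fix y assume "y \<in> Trip"
    then show "AE w in stream_space (measure_pmf (input_pmf n k pa q)).
      \<exists>t. fst (snd y) \<in># mix_out (w !! t) (mix_state w t) \<and> snd (snd y) \<notin> snd (snd (w !! t))"
      unfolding Trip_def
      by (intro success[where R=R and i="fst y" and r="fst (snd y)" and d="snd (snd y)"] assms(1-4,7)) auto
  qed (rule countable_finite[OF finT])
  then show ?thesis
  proof (rule eventually_mono)
    fix w
    assume h: "\<forall>y\<in>Trip. \<exists>t. fst (snd y) \<in># mix_out (w !! t) (mix_state w t) \<and> snd (snd y) \<notin> snd (snd (w !! t))"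
    define f where "f (y :: nat \<times> 'r \<times> nat) = (SOME t. fst (snd y) \<in># mix_out (w !! t) (mix_state w t) \<and> snd (snd y) \<notin> snd (snd (w !! t)))" for y
    have f: "fst (snd y) \<in># mix_out (w !! f y) (mix_state w (f y)) \<and> snd (snd y) \<notin> snd (snd (w !! f y))"
      if "y \<in> Trip" for y
      using h that unfolding f_def by (metis (mono_tags, lifting) someI_ex)
    define T where "T = Suc (sum f Trip)"
    have fT: "f y < T" if "y \<in> Trip" for y
      using member_le_sum[of y Trip f] that finT unfolding T_def by auto
    have "\<forall>i<n. \<forall>r\<in>R i. \<forall>d<n. d \<noteq> i \<longrightarrow>
        (\<exists>t<T. r \<in># mix_out (w !! t) (mix_state w t) \<and> d \<notin> snd (snd (w !! t)))"
    proof (intro allI impI ballI)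
      fix i r d assume "i < n" "r \<in> R i" "d < n" "d \<noteq> i"
      then have y: "(i, r, d) \<in> Trip" unfolding Trip_def by simp
      show "\<exists>t<T. r \<in># mix_out (w !! t) (mix_state w t) \<and> d \<notin> snd (snd (w !! t))"
        using f[OF y] fT[OF y] by (intro exI[of _ "f (i, r, d)"]) simp
    qed
    then have "identified n k m pa R a w T"
      using assms by (intro identify) auto
    then show "\<exists>T. identified n k m pa R a w T" by blast
  qed
qed


end
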